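(* Let $E=\mathbb{C}/\Lambda$ be a complex elliptic curve with origin $P$, let $\sigma:E\to E$ be the involution $z\mapsto -z$, and let $Q,R,S$ be the three nonzero $2$-torsion points of $E$. Let $g$ be a meromorphic function on $E$ of degree $5$ with a pole of order $5$ at $P$, with exactly three further ramification points $x,y,z\in E\setminus\{P\}$, each of ramification index $3$, and no other ramification. Suppose that $g\circ\sigma=\pm g$, that $x=Q$ and that $g(Q)=0$. Then the divisor of zeros of $g$ is $g^*(0)=3Q+R+S$. *)

theory Defs
  imports "HOL-Complex_Analysis.Complex_Analysis"
begin

definition lattice :: "complex \<Rightarrow> complex \<Rightarrow> complex set" where
  "lattice w1 w2 = {of_int m * w1 + of_int n * w2 | m n. True}"

text \<open>Congruence modulo the lattice (equality of points of E = C / Lambda).\<close>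
definition lat_cong :: "complex \<Rightarrow> complex \<Rightarrow> complex \<Rightarrow> complex \<Rightarrow> bool" where
  "lat_cong w1 w2 a b \<longleftrightarrow> a - b \<in> lattice w1 w2"

end

theory Submission
  imports Defs
begin



definition cA :: "complex \<Rightarrow> complex \<Rightarrow> complex \<Rightarrow> real" where
  "cA w1 w2 z = Im (z * cnj w2) / Im (w1 * cnj w2)"
definition cB :: "complex \<Rightarrow> complex \<Rightarrow> complex \<Rightarrow> real" where
  "cB w1 w2 z = Im (z * cnj w1) / Im (w2 * cnj w1)"

lemma K_nz: assumes "Im (w2 / w1) \<noteq> 0" shows "Im (w1 * cnj w2) \<noteq> 0"
proof -
  have "w1 \<noteq> 0" using assms by auto
  then show ?thesis using assms
    by (auto simp: Im_divide algebra_simps)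
qed

lemma K_nz': assumes "Im (w1 * cnj w2) \<noteq> 0" shows "Im (w2 * cnj w1) \<noteq> 0"
  using assms by (auto simp: algebra_simps)

lemma decomp: assumes "Im (w1 * cnj w2) \<noteq> 0"
  shows "z = of_real (cA w1 w2 z) * w1 + of_real (cB w1 w2 z) * w2"
proof -
  have K2: "Im (w2 * cnj w1) = - Im (w1 * cnj w2)" by (simp add: algebra_simps)
  have id: "of_real (Im (w1 * cnj w2)) * z = of_real (Im (z * cnj w2)) * w1 - of_real (Im (z * cnj w1)) * w2"
    by (simp add: complex_eq_iff algebra_simps)
  have gen: "z = of_real (A/K) * w1 + of_real (B / -K) * w2"
    if "K \<noteq> 0" "of_real K * z = of_real A * w1 - of_real B * w2" for K A B :: real
  proof -
    have "z = (of_real K * z) / of_real K" using that(1) by simp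
    also have "\<dots> = (of_real A * w1 - of_real B * w2) / of_real K" using that(2) by simp
    also have "\<dots> = of_real (A/K) * w1 + of_real (B / -K) * w2"
      using that(1) by (simp add: field_simps)
    finally show ?thesis .
  qed
  show ?thesis unfolding cA_def cB_def K2 by (rule gen[OF assms id])

qed

lemma cA_lin: assumes "Im (w1 * cnj w2) \<noteq> 0"
  shows "cA w1 w2 (of_real s * w1 + of_real t * w2) = s"
  using assms unfolding cA_def by (simp add: field_simps)

lemma cB_lin: assumes "Im (w1 * cnj w2) \<noteq> 0"
  shows "cB w1 w2 (of_real s * w1 + of_real t * w2) = t"
  using assms K_nz'[OF assms] unfolding cB_def by (simp add: field_simps)

lemma cA_add: "cA w1 w2 (x + y) = cA w1 w2 x + cA w1 w2 y"
  and cA_diff: "cA w1 w2 (x - y) = cA w1 w2 x - cA w1 w2 y"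
  and cA_minus: "cA w1 w2 (- x) = - cA w1 w2 x"
  and cA_scale: "cA w1 w2 (r *\<^sub>R x) = r * cA w1 w2 x"
  and cA_ofreal: "cA w1 w2 (of_real r * x) = r * cA w1 w2 x"
  unfolding cA_def by (auto simp: algebra_simps add_divide_distrib diff_divide_distrib scaleR_conv_of_real)

lemma cB_add: "cB w1 w2 (x + y) = cB w1 w2 x + cB w1 w2 y"
  and cB_diff: "cB w1 w2 (x - y) = cB w1 w2 x - cB w1 w2 y"
  and cB_minus: "cB w1 w2 (- x) = - cB w1 w2 x"
  and cB_scale: "cB w1 w2 (r *\<^sub>R x) = r * cB w1 w2 x"
  and cB_ofreal: "cB w1 w2 (of_real r * x) = r * cB w1 w2 x"
  unfolding cB_def by (auto simp: algebra_simps add_divide_distrib diff_divide_distrib scaleR_conv_of_real)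

lemma cA_w1: "Im (w1 * cnj w2) \<noteq> 0 \<Longrightarrow> cA w1 w2 w1 = 1"
  and cA_w2: "cA w1 w2 w2 = 0"
  and cB_w1: "cB w1 w2 w1 = 0"
  and cB_w2: "Im (w1 * cnj w2) \<noteq> 0 \<Longrightarrow> cB w1 w2 w2 = 1"
  unfolding cA_def cB_def using K_nz' by (auto simp: algebra_simps)

lemma lattice_coords: assumes "Im (w1 * cnj w2) \<noteq> 0"
  shows "lattice w1 w2 = {z. cA w1 w2 z \<in> \<int> \<and> cB w1 w2 z \<in> \<int>}"
proof safe
  fix z assume "z \<in> lattice w1 w2"
  then obtain m n where z: "z = of_int m * w1 + of_int n * w2" by (auto simp: lattice_def)
  have "z = of_real (of_int m) * w1 + of_real (of_int n) * w2" using z by simp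
  then show "cA w1 w2 z \<in> \<int>" "cB w1 w2 z \<in> \<int>"
    using cA_lin[OF assms] cB_lin[OF assms] by (metis Ints_of_int)+
next
  fix z assume "cA w1 w2 z \<in> \<int>" "cB w1 w2 z \<in> \<int>"
  then obtain m n where "cA w1 w2 z = of_int m" "cB w1 w2 z = of_int n"
    by (auto elim!: Ints_cases)
  then have "z = of_int m * w1 + of_int n * w2" using decomp[OF assms, of z] by simp
  then show "z \<in> lattice w1 w2" by (auto simp: lattice_def)
qed




locale ell =
  fixes w1 w2 :: complex and g :: "complex \<Rightarrow> complex"
  assumes lin_indep: "Im (w2 / w1) \<noteq> 0"
    and per1: "\<And>w. g (w + w1) = g w"
    and per2: "\<And>w. g (w + w2) = g w"
    and holo: "g holomorphic_on (- lattice w1 w2)"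
    and pole: "is_pole g 0"
begin

abbreviation "L \<equiv> lattice w1 w2"
abbreviation "ca \<equiv> cA w1 w2"
abbreviation "cb \<equiv> cB w1 w2"

lemma K: "Im (w1 * cnj w2) \<noteq> 0" using K_nz[OF lin_indep] .

lemma L_coords: "L = {z. ca z \<in> \<int> \<and> cb z \<in> \<int>}" using lattice_coords[OF K] .

lemma L_mem: "z \<in> L \<longleftrightarrow> ca z \<in> \<int> \<and> cb z \<in> \<int>" using L_coords by auto

lemma dec: "z = of_real (ca z) * w1 + of_real (cb z) * w2" using decomp[OF K] .

lemma L_add: "a \<in> L \<Longrightarrow> b \<in> L \<Longrightarrow> a + b \<in> L"
  unfolding L_mem cA_add cB_add by (metis Ints_add)
lemma L_diff: "a \<in> L \<Longrightarrow> b \<in> L \<Longrightarrow> a - b \<in> L"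
  unfolding L_mem cA_diff cB_diff by (metis Ints_diff)
lemma L_neg: "a \<in> L \<Longrightarrow> - a \<in> L"
  unfolding L_mem cA_minus cB_minus by (metis Ints_minus)
lemma L_0: "0 \<in> L"
  unfolding L_mem by (simp add: cA_def cB_def)
lemma L_w1: "w1 \<in> L"
  unfolding L_mem cA_w1[OF K] cB_w1 by simp
lemma L_w2: "w2 \<in> L"
  unfolding L_mem cB_w2[OF K] cA_w2 by simp

lemma L_int: "of_int m * w1 + of_int n * w2 \<in> L"
  unfolding lattice_def by blast

lemma L_2: "a \<in> L \<Longrightarrow> 2 * a \<in> L"
  using L_add[of a a] by (metis mult_2)

lemma per1_nat: "g (w + of_nat k * w1) = g w"
proof (induction k)
  case (Suc k)
  have "g (w + of_nat (Suc k) * w1) = g ((w + of_nat k * w1) + w1)" by (simp add: algebra_simps)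
  also have "\<dots> = g w" using per1 Suc by simp
  finally show ?case .
qed simp

lemma per2_nat: "g (w + of_nat k * w2) = g w"
proof (induction k)
  case (Suc k)
  have "g (w + of_nat (Suc k) * w2) = g ((w + of_nat k * w2) + w2)" by (simp add: algebra_simps)
  also have "\<dots> = g w" using per2 Suc by simp
  finally show ?case .
qed simp

lemma per1_int: "g (w + of_int m * w1) = g w"
proof (cases "m \<ge> 0")
  case True
  then obtain k where "m = int k" by (metis nonneg_int_cases)
  then show ?thesis using per1_nat by simp
next
  case False
  define k where "k = nat (- m)"
  then have k: "m = - int k" using False by simp
  have "g w = g ((w + of_int m * w1) + of_nat k * w1)" using k by simp
  also have "\<dots> = g (w + of_int m * w1)" by (rule per1_nat)
  finally show ?thesis by simp
qed

lemma per2_int: "g (w + of_int m * w2) = g w"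
proof (cases "m \<ge> 0")
  case True
  then obtain k where "m = int k" by (metis nonneg_int_cases)
  then show ?thesis using per2_nat by simp
next
  case False
  define k where "k = nat (- m)"
  then have k: "m = - int k" using False by simp
  have "g w = g ((w + of_int m * w2) + of_nat k * w2)" using k by simp
  also have "\<dots> = g (w + of_int m * w2)" by (rule per2_nat)
  finally show ?thesis by simp
qed

lemma gper: assumes "l \<in> L" shows "g (w + l) = g w"
proof -
  obtain m n where l: "l = of_int m * w1 + of_int n * w2" using assms unfolding lattice_def by blast
  have "g (w + l) = g ((w + of_int m * w1) + of_int n * w2)" using l by (simp add: algebra_simps)
  also have "\<dots> = g w" using per1_int per2_int by simp
  finally show ?thesis .
qed

lemma gper_fun: assumes "l \<in> L" shows "(\<lambda>w. g (w + l)) = g"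
  using gper[OF assms] by (rule ext)

lemma cong_eq: "lat_cong w1 w2 a b \<Longrightarrow> g a = g b"
  unfolding lat_cong_def using gper[of "a - b" b] by simp

lemma ca_cont: "continuous_on UNIV ca"
  unfolding cA_def using K by (intro continuous_intros) auto
lemma cb_cont: "continuous_on UNIV cb"
  unfolding cB_def using K_nz'[OF K] by (intro continuous_intros) auto

lemma L_closed: "closed L"
proof -
  have "L = (ca -` \<int>) \<inter> (cb -` \<int>)" using L_mem by blast
  moreover have "closed (ca -` \<int>)"
    using continuous_closed_vimage[OF closed_Ints, of ca] ca_cont by (simp add: continuous_on_eq_continuous_within)
  moreover have "closed (cb -` \<int>)"
    using continuous_closed_vimage[OF closed_Ints, of cb] cb_cont by (simp add: continuous_on_eq_continuous_within)
  ultimately show ?thesis by auto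
qed

lemma L_open_compl: "open (- L)" using L_closed by (simp add: open_Compl)

lemma L_countable: "countable L"
proof -
  have "L = (\<lambda>(m,n). of_int m * w1 + of_int n * w2) ` (UNIV :: (int \<times> int) set)"
    unfolding lattice_def by auto
  then show ?thesis by simp
qed

lemma L_conn: "connected (- L)"
  using path_connected_complement_countable[OF _ L_countable] path_connected_imp_connected by simp

lemma ca_bound: "\<bar>ca z\<bar> \<le> norm z * norm w2 / \<bar>Im (w1 * cnj w2)\<bar>"
proof -
  have "\<bar>Im (z * cnj w2)\<bar> \<le> norm (z * cnj w2)" by (rule abs_Im_le_cmod)
  also have "\<dots> = norm z * norm w2" by (simp add: norm_mult)
  finally show ?thesis unfolding cA_def abs_divide using K by (simp add: divide_right_mono)
qed

lemma cb_bound: "\<bar>cb z\<bar> \<le> norm z * norm w1 / \<bar>Im (w1 * cnj w2)\<bar>"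
proof -
  have "\<bar>Im (z * cnj w1)\<bar> \<le> norm (z * cnj w1)" by (rule abs_Im_le_cmod)
  also have "\<dots> = norm z * norm w1" by (simp add: norm_mult)
  moreover have "\<bar>Im (w2 * cnj w1)\<bar> = \<bar>Im (w1 * cnj w2)\<bar>" by (simp add: algebra_simps)
  ultimately show ?thesis unfolding cB_def abs_divide using K by (simp add: divide_right_mono)
qed

lemma L_finite_box: "finite {z \<in> L. \<bar>ca z\<bar> \<le> M \<and> \<bar>cb z\<bar> \<le> M}"
proof -
  define N where "N = \<lceil>M\<rceil>"
  have "{z \<in> L. \<bar>ca z\<bar> \<le> M \<and> \<bar>cb z\<bar> \<le> M} \<subseteq> (\<lambda>(m,n). of_int m * w1 + of_int n * w2) ` ({-N..N} \<times> {-N..N})"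
  proof
    fix z assume z: "z \<in> {z \<in> L. \<bar>ca z\<bar> \<le> M \<and> \<bar>cb z\<bar> \<le> M}"
    then obtain m n where mn: "ca z = of_int m" "cb z = of_int n" using L_mem by (auto elim!: Ints_cases)
    have "z = of_int m * w1 + of_int n * w2" using dec[of z] mn by simp
    moreover have "m \<in> {-N..N}" "n \<in> {-N..N}" using z mn unfolding N_def by (auto simp: abs_le_iff; linarith)+
    ultimately show "z \<in> (\<lambda>(m,n). of_int m * w1 + of_int n * w2) ` ({-N..N} \<times> {-N..N})" by force
  qed
  then show ?thesis by (rule finite_subset) auto
qed

lemma bounded_coords: assumes bB: "bounded B" shows "\<exists>M. \<forall>z\<in>B. \<bar>ca z\<bar> \<le> M \<and> \<bar>cb z\<bar> \<le> M"
proof -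
  obtain r where r: "\<forall>z\<in>B. norm z \<le> r" using bB[unfolded bounded_iff] by blast
  define M where "M = r * (norm w1 + norm w2) / \<bar>Im (w1 * cnj w2)\<bar>"
  have "\<bar>ca z\<bar> \<le> M \<and> \<bar>cb z\<bar> \<le> M" if "z \<in> B" for z
  proof -
    have zr: "norm z \<le> r" using r that by blast
    then have r0: "0 \<le> r" by (meson norm_ge_zero order_trans)
    have "norm z * norm w2 \<le> r * (norm w1 + norm w2)"
      using zr r0 by (intro mult_mono) auto
    moreover have "norm z * norm w1 \<le> r * (norm w1 + norm w2)"
      using zr r0 by (intro mult_mono) auto
    ultimately have "norm z * norm w2 / \<bar>Im (w1 * cnj w2)\<bar> \<le> M" "norm z * norm w1 / \<bar>Im (w1 * cnj w2)\<bar> \<le> M"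
      unfolding M_def by (meson abs_ge_zero divide_right_mono)+
    then show ?thesis using ca_bound[of z] cb_bound[of z] by linarith
  qed
  then show ?thesis by blast
qed

lemma L_finite_bounded: "bounded B \<Longrightarrow> finite (L \<inter> B)"
proof -
  assume "bounded B"
  then obtain M where M: "\<forall>z\<in>B. \<bar>ca z\<bar> \<le> M \<and> \<bar>cb z\<bar> \<le> M" using bounded_coords by blast
  have "L \<inter> B \<subseteq> {z \<in> L. \<bar>ca z\<bar> \<le> M \<and> \<bar>cb z\<bar> \<le> M}" using M by auto
  then show ?thesis using L_finite_box finite_subset by blast
qed

end



context ell begin

lemma L_discrete: "\<exists>\<rho>>0. \<forall>w\<in>ball p \<rho>. w \<noteq> p \<longrightarrow> w \<notin> L"
proof -
  have fin: "finite (L \<inter> cball p 1)" by (rule L_finite_bounded) simp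
  obtain e where e: "e > 0" "\<forall>w\<in>ball p e. w \<in> UNIV \<and> (w \<noteq> p \<longrightarrow> w \<notin> L \<inter> cball p 1)"
    using finite_ball_avoid[OF open_UNIV fin] by blast
  show ?thesis
  proof (intro exI[of _ "min e 1"] conjI ballI impI)
    fix w assume w: "w \<in> ball p (min e 1)" "w \<noteq> p"
    then have "w \<in> ball p e" "w \<in> cball p 1" by auto
    then show "w \<notin> L" using e w by blast
  qed (use e in auto)
qed

lemma ev_notL: "eventually (\<lambda>w. w \<notin> L) (at p)"
proof -
  obtain \<rho> where "\<rho> > 0" "\<forall>w\<in>ball p \<rho>. w \<noteq> p \<longrightarrow> w \<notin> L" using L_discrete by blast
  then show ?thesis unfolding eventually_at by (intro exI[of _ \<rho>]) (auto simp: dist_commute)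
qed

lemma pole_L: assumes "l \<in> L" shows "is_pole g l"
proof -
  have "is_pole g 0" by (rule pole)
  also have "g = (\<lambda>x. g (x + l))" using gper_fun[OF assms] by simp
  finally have "filterlim (\<lambda>x. g (x + l)) at_infinity (at 0)" unfolding is_pole_def .
  then have "filterlim g at_infinity (filtermap (\<lambda>x. x + l) (at 0))"
    by (simp add: filterlim_filtermap)
  then show ?thesis unfolding is_pole_def by (simp add: at_to_0[symmetric])
qed

lemma ev_nz: assumes "l \<in> L" shows "eventually (\<lambda>w. g w \<noteq> 0) (at l)"
  using pole_L[OF assms] unfolding is_pole_def by (rule filterlim_at_infinity_imp_eventually_ne)

definition "Zs = {w. w \<notin> L \<and> g w = 0}"

lemma not_limpt: "\<not> x islimpt Zs"
proof (cases "x \<in> L")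
  case True
  have "eventually (\<lambda>y. y \<notin> Zs) (at x)"
    using ev_nz[OF True] by eventually_elim (auto simp: Zs_def)
  then show ?thesis by (simp add: islimpt_iff_eventually)
next
  case False
  show ?thesis
  proof
    assume lim: "x islimpt Zs"
    have all0: "g w = 0" if "w \<in> - L" for w
      by (rule analytic_continuation[OF holo L_open_compl L_conn _ _ lim]) (use False that in \<open>auto simp: Zs_def\<close>)
    have "eventually (\<lambda>w. g w \<noteq> 0 \<and> w \<notin> L) (at 0)"
      using ev_nz[OF L_0] ev_notL by (rule eventually_conj)
    then have "eventually (\<lambda>w. False) (at (0::complex))"
      by eventually_elim (use all0 in auto)
    then show False by (simp add: trivial_limit_at)
  qed
qed

lemma Zs_closed: "closed Zs"
  using not_limpt closed_limpt by blast

lemma Zs_finite_bounded: assumes "bounded B" shows "finite (Zs \<inter> B)"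
proof -
  have "finite (closure B \<inter> Zs)"
    by (rule finite_not_islimpt_in_compact) (use assms compact_closure not_limpt in auto)
  then show ?thesis by (rule finite_subset[rotated]) (use closure_subset in auto)
qed

lemma zorder_per: assumes "l \<in> L" shows "zorder g (p + l) = zorder g p"
proof -
  have "zorder g (p + l) = zorder (\<lambda>u. g (u + (p + l))) 0" by (rule zorder_shift)
  also have "(\<lambda>u. g (u + (p + l))) = (\<lambda>u. g (u + p))"
    using gper[OF assms] by (simp add: add.assoc[symmetric])
  also have "zorder \<dots> 0 = zorder g p" by (rule zorder_shift[symmetric])
  finally show ?thesis .
qed

lemma not_even: assumes ev: "\<forall>w. w \<notin> L \<longrightarrow> g (- w) = g w" and ord: "zorder g 0 = -5"
  shows False
proof -
  obtain \<rho> where \<rho>: "\<rho> > 0" "\<forall>w\<in>ball 0 \<rho>. w \<noteq> 0 \<longrightarrow> w \<notin> L" using L_discrete by blast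
  have hol: "g holomorphic_on ball 0 \<rho> - {0}"
    by (rule holomorphic_on_subset[OF holo]) (use \<rho> in auto)
  define h where "h = zor_poly g 0"
  have ex: "zorder g 0 < 0 \<and> h 0 \<noteq> 0 \<and> (\<exists>r. r>0 \<and> cball (0::complex) r \<subseteq> ball 0 \<rho> \<and> h holomorphic_on cball 0 r
    \<and> (\<forall>w\<in>cball 0 r - {0}. g w  = h w / (w-0) ^ nat (- zorder g 0) \<and> h w \<noteq>0))"
    using zorder_exist_pole[OF hol open_ball _ pole] \<rho> unfolding h_def by simp
  then obtain r where r0: "r > 0" "cball (0::complex) r \<subseteq> ball 0 \<rho>" "h holomorphic_on cball 0 r"
     "\<forall>w\<in>cball 0 r - {0}. g w  = h w / (w-0) ^ nat (- zorder g 0) \<and> h w \<noteq>0" by blast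
  have r: "h 0 \<noteq> 0" "r > 0" "h holomorphic_on cball 0 r" "cball (0::complex) r \<subseteq> ball 0 \<rho>"
     "\<forall>w\<in>cball 0 r - {0}. g w = h w / w ^ 5"
    using ex r0 ord by auto
  have eq: "h w = - h (- w)" if w: "w \<in> ball 0 r" "w \<noteq> 0" for w
  proof -
    have "w \<in> cball 0 r - {0}" "-w \<in> cball 0 r - {0}" using w by auto
    then have gw: "g w = h w / w ^ 5" and gmw: "g (-w) = h (-w) / (-w) ^ 5" using r(5) by blast+
    have "w \<in> cball 0 r" using w by auto
    then have "w \<in> ball 0 \<rho>" using r(4) by blast
    then have "w \<notin> L" using w \<rho>(2) by blast
    then have "g (- w) = g w" using ev by blast
    then have "h (-w) / (-w) ^ 5 = h w / w ^ 5" using gw gmw by simp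
    moreover have "w ^ 5 \<noteq> 0" using w by simp
    ultimately show ?thesis by (simp add: field_simps)
  qed
  have ct: "continuous_on (cball 0 r) h" using r(3) holomorphic_on_imp_continuous_on by blast
  have "isCont h 0" using continuous_on_interior[OF ct] r(2) by simp
  then have t1: "(h \<longlongrightarrow> h 0) (at 0)" by (simp add: isCont_def)
  have "isCont (\<lambda>w. h (- w)) 0" using isCont_o2[where f=uminus and a="0::complex" and g=h] \<open>isCont h 0\<close> by simp
  then have t2: "((\<lambda>w. - h (- w)) \<longlongrightarrow> - h 0) (at 0)" by (intro tendsto_minus) (simp add: isCont_def)
  have ev0: "eventually (\<lambda>w. - h (- w) = h w) (at 0)"
    unfolding eventually_at
  proof (intro exI[of _ r] conjI ballI impI)
    fix w :: complex assume "w \<in> UNIV" and a: "w \<noteq> 0 \<and> dist w 0 < r"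
    from a have "w \<in> ball 0 r" by (simp add: dist_norm)
    moreover have "w \<noteq> 0" using a by simp
    ultimately show "- h (- w) = h w" by (rule eq[symmetric])
  qed (rule r(2))
  have t3: "(h \<longlongrightarrow> - h 0) (at 0)" by (rule Lim_transform_eventually[OF t2 ev0])
  have "h 0 = - h 0" using tendsto_unique[OF trivial_limit_at t1 t3] by simp
  then show False using r(1) by simp
qed

end



context ell begin

lemma ca_int: "ca (of_int m * w1 + of_int n * w2) = of_int m"
  using cA_lin[OF K, of "of_int m" "of_int n"] by simp
lemma cb_int: "cb (of_int m * w1 + of_int n * w2) = of_int n"
  using cB_lin[OF K, of "of_int m" "of_int n"] by simp

lemma lin_ca: "linear ca"
  by (rule linearI) (simp_all add: cA_add cA_scale)
lemma lin_cb: "linear cb"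
  by (rule linearI) (simp_all add: cB_add cB_scale)

lemma seg_coords: assumes "p \<in> closed_segment x y"
  shows "\<exists>u. 0 \<le> u \<and> u \<le> 1 \<and> ca p = (1-u) * ca x + u * ca y \<and> cb p = (1-u) * cb x + u * cb y"
proof -
  obtain u where u: "0 \<le> u" "u \<le> 1" "p = (1 - u) *\<^sub>R x + u *\<^sub>R y"
    using assms unfolding closed_segment_def by blast
  show ?thesis
    by (rule exI[of _ u]) (simp add: u cA_add cA_scale cB_add cB_scale)
qed

lemma norm_coords: "norm z \<le> \<bar>ca z\<bar> * norm w1 + \<bar>cb z\<bar> * norm w2"
proof -
  have "norm z = norm (of_real (ca z) * w1 + of_real (cb z) * w2)" using dec[of z] by simp
  also have "\<dots> \<le> norm (of_real (ca z) * w1) + norm (of_real (cb z) * w2)" by (rule norm_triangle_ineq)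
  also have "\<dots> = \<bar>ca z\<bar> * norm w1 + \<bar>cb z\<bar> * norm w2" by (simp add: norm_mult)
  finally show ?thesis .
qed

lemma choose_param: assumes "finite (F :: real set)" shows "\<exists>\<alpha>. -1 < \<alpha> \<and> \<alpha> < 0 \<and> \<alpha> \<notin> F"
proof -
  have "infinite ({-1<..<0::real} - F)" using Diff_infinite_finite[OF assms] by simp
  then obtain \<alpha> where "\<alpha> \<in> {-1<..<0::real} - F" using infinite_imp_nonempty by blast
  then show ?thesis by auto
qed

lemma reduce: assumes "z \<in> Zs"
  shows "\<exists>z0\<in>Zs. 0 \<le> ca z0 \<and> ca z0 < 1 \<and> 0 \<le> cb z0 \<and> cb z0 < 1 \<and> ca z - ca z0 \<in> \<int> \<and> cb z - cb z0 \<in> \<int>"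
proof -
  define l where "l = of_int \<lfloor>ca z\<rfloor> * w1 + of_int \<lfloor>cb z\<rfloor> * w2"
  have lL: "l \<in> L" unfolding l_def by (rule L_int)
  define z0 where "z0 = z - l"
  have z: "z \<notin> L" "g z = 0" using assms by (auto simp: Zs_def)
  have "z0 \<notin> L"
  proof
    assume "z0 \<in> L" then have "z0 + l \<in> L" using lL L_add by blast
    then show False using z by (simp add: z0_def)
  qed
  moreover have "g z0 = 0"
    using gper[OF L_neg[OF lL], of z] z unfolding z0_def by simp
  ultimately have "z0 \<in> Zs" by (simp add: Zs_def)
  moreover have "ca z0 = ca z - \<lfloor>ca z\<rfloor>" "cb z0 = cb z - \<lfloor>cb z\<rfloor>"
    unfolding z0_def l_def by (simp_all add: cA_diff cB_diff ca_int cb_int)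
  moreover have "0 \<le> ca z - \<lfloor>ca z\<rfloor>" "ca z - \<lfloor>ca z\<rfloor> < 1"
    "0 \<le> cb z - \<lfloor>cb z\<rfloor>" "cb z - \<lfloor>cb z\<rfloor> < 1" by linarith+
  ultimately show ?thesis
    by (intro bexI[of _ z0]) auto
qed

lemma int_between: assumes "(x::real) \<in> \<int>" "0 < x" "x < 2" shows "x = 1"
proof -
  obtain k where k: "x = of_int k" using assms(1) by (auto elim: Ints_cases)
  then have "0 < k" "k < 2" using assms by auto
  then have "k = 1" by simp
  then show ?thesis using k by simp
qed

lemma box_bounded: "bounded {z. \<bar>ca z\<bar> \<le> 1 \<and> \<bar>cb z\<bar> \<le> 1}"
  unfolding bounded_iff
proof (intro exI[of _ "norm w1 + norm w2"] ballI)
  fix z assume "z \<in> {z. \<bar>ca z\<bar> \<le> 1 \<and> \<bar>cb z\<bar> \<le> 1}"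
  then have h: "\<bar>ca z\<bar> \<le> 1" "\<bar>cb z\<bar> \<le> 1" by auto
  have "\<bar>ca z\<bar> * norm w1 \<le> norm w1" using h(1) by (simp add: mult_left_le_one_le)
  moreover have "\<bar>cb z\<bar> * norm w2 \<le> norm w2" using h(2) by (simp add: mult_left_le_one_le)
  ultimately show "norm z \<le> norm w1 + norm w2" using norm_coords[of z] by linarith
qed

lemma choose_good: "\<exists>\<alpha> \<beta>. -1 < \<alpha> \<and> \<alpha> < 0 \<and> -1 < \<beta> \<and> \<beta> < 0 \<and> (\<forall>z\<in>Zs. ca z - \<alpha> \<notin> \<int> \<and> cb z - \<beta> \<notin> \<int>)"
proof -
  define Z0 where "Z0 = Zs \<inter> {z. \<bar>ca z\<bar> \<le> 1 \<and> \<bar>cb z\<bar> \<le> 1}"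
  have fin: "finite Z0" unfolding Z0_def by (rule Zs_finite_bounded[OF box_bounded])
  obtain \<alpha> where \<alpha>: "-1 < \<alpha>" "\<alpha> < 0" "\<alpha> \<notin> (\<lambda>z. ca z - 1) ` Z0"
    using choose_param[of "(\<lambda>z. ca z - 1) ` Z0"] fin by blast
  obtain \<beta> where \<beta>: "-1 < \<beta>" "\<beta> < 0" "\<beta> \<notin> (\<lambda>z. cb z - 1) ` Z0"
    using choose_param[of "(\<lambda>z. cb z - 1) ` Z0"] fin by blast
  have "ca z - \<alpha> \<notin> \<int> \<and> cb z - \<beta> \<notin> \<int>" if z: "z \<in> Zs" for z
  proof -
    obtain z0 where z0: "z0 \<in> Zs" "0 \<le> ca z0" "ca z0 < 1" "0 \<le> cb z0" "cb z0 < 1"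
      "ca z - ca z0 \<in> \<int>" "cb z - cb z0 \<in> \<int>" using reduce[OF z] by blast
    have z0Z: "z0 \<in> Z0" using z0 unfolding Z0_def by auto
    show ?thesis
    proof
      show "ca z - \<alpha> \<notin> \<int>"
      proof
        assume "ca z - \<alpha> \<in> \<int>"
        then have "(ca z - \<alpha>) - (ca z - ca z0) \<in> \<int>" using z0(6) by (rule Ints_diff)
        then have "ca z0 - \<alpha> \<in> \<int>" by simp
        then have "ca z0 - \<alpha> = 1" by (rule int_between) (use z0 \<alpha> in auto)
        then have "\<alpha> = ca z0 - 1" by simp
        then show False using \<alpha>(3) z0Z by blast
      qed
      show "cb z - \<beta> \<notin> \<int>"
      proof
        assume "cb z - \<beta> \<in> \<int>"
        then have "(cb z - \<beta>) - (cb z - cb z0) \<in> \<int>" using z0(7) by (rule Ints_diff)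
        then have "cb z0 - \<beta> \<in> \<int>" by simp
        then have "cb z0 - \<beta> = 1" by (rule int_between) (use z0 \<beta> in auto)
        then have "\<beta> = cb z0 - 1" by simp
        then show False using \<beta>(3) z0Z by blast
      qed
    qed
  qed
  then show ?thesis using \<alpha> \<beta> by blast
qed

end



context ell begin

lemma periodic_deriv: assumes "l \<in> L" shows "deriv g (u + l) = deriv g u"
proof -
  have "\<And>D. (g has_field_derivative D) (at (u + l)) \<longleftrightarrow> (g has_field_derivative D) (at u)"
    using DERIV_shift[of g _ u l] gper_fun[OF assms] by simp
  then show ?thesis unfolding deriv_def by simp
qed

lemma shift_integral: assumes "\<And>u. F (u + l) = F u"
  shows "contour_integral (linepath (x + l) (y + l)) F = contour_integral (linepath x y) F"
proof -
  have "\<And>t. linepath (x + l) (y + l) t = linepath x y t + l" by (simp add: linepath_def algebra_simps)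
  then show ?thesis unfolding contour_integral_integral using assms by simp
qed

lemma notint: assumes "-1 < (x::real)" "x < 0" shows "x \<notin> \<int>" "x + 1 \<notin> \<int>"
proof -
  show "x \<notin> \<int>"
  proof
    assume "x \<in> \<int>" then obtain k where "x = of_int k" by (auto elim: Ints_cases)
    then show False using assms by auto
  qed
  show "x + 1 \<notin> \<int>"
  proof
    assume "x + 1 \<in> \<int>" then obtain k where "x + 1 = of_int k" by (metis Ints_cases)
    then have "real_of_int 0 < of_int k" "of_int k < real_of_int 1" using assms by auto
    then have "0 < k" "k < 1" by (simp_all only: of_int_less_iff)
    then show False by simp
  qed
qed

lemma int_mid: assumes "-1 < (x::real)" "x < 0" "y \<in> \<int>" "x < y" "y < x + 1" shows "y = 0"
proof -
  obtain k where "y = of_int k" using assms(3) by (auto elim: Ints_cases)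
  then show ?thesis using assms by auto
qed

lemma arg_count:
  fixes \<alpha> \<beta> :: real
  assumes \<alpha>: "-1 < \<alpha>" "\<alpha> < 0" and \<beta>: "-1 < \<beta>" "\<beta> < 0"
    and good: "\<forall>z\<in>Zs. ca z - \<alpha> \<notin> \<int> \<and> cb z - \<beta> \<notin> \<int>"
  defines "Pin \<equiv> {p. \<alpha> < ca p \<and> ca p < \<alpha> + 1 \<and> \<beta> < cb p \<and> cb p < \<beta> + 1}"
  shows "finite (Zs \<inter> Pin) \<and> zorder g 0 + (\<Sum>p\<in>Zs \<inter> Pin. zorder g p) = 0"
proof -
  define a where "a = of_real \<alpha> * w1 + of_real \<beta> * w2"
  define b where "b = a + w1"
  define c where "c = a + w1 + w2"
  define d where "d = a + w2"
  define \<gamma> where "\<gamma> = linepath a b +++ linepath b c +++ linepath c d +++ linepath d a"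
  define Pcl where "Pcl = {p. \<alpha> \<le> ca p \<and> ca p \<le> \<alpha> + 1 \<and> \<beta> \<le> cb p \<and> cb p \<le> \<beta> + 1}"
  define bnd where "bnd = (\<lambda>p. ((ca p = \<alpha> \<or> ca p = \<alpha> + 1) \<and> \<beta> \<le> cb p \<and> cb p \<le> \<beta> + 1) \<or>
                           ((cb p = \<beta> \<or> cb p = \<beta> + 1) \<and> \<alpha> \<le> ca p \<and> ca p \<le> \<alpha> + 1))"
  have va: "ca a = \<alpha>" "cb a = \<beta>" using cA_lin[OF K] cB_lin[OF K] by (simp_all add: a_def)
  have vb: "ca b = \<alpha> + 1" "cb b = \<beta>" using va by (simp_all add: b_def cA_add cB_add cA_w1[OF K] cB_w1)
  have vc: "ca c = \<alpha> + 1" "cb c = \<beta> + 1"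
    using va by (simp_all add: c_def cA_add cB_add cA_w1[OF K] cB_w1 cA_w2 cB_w2[OF K])
  have vd: "ca d = \<alpha>" "cb d = \<beta> + 1" using va by (simp_all add: d_def cA_add cB_add cA_w2 cB_w2[OF K])
  have pi: "path_image \<gamma> = closed_segment a b \<union> closed_segment b c \<union> closed_segment c d \<union> closed_segment d a"
    unfolding \<gamma>_def by (simp add: path_image_join Un_assoc)
  have seg_bnd: "bnd p" if pim: "p \<in> path_image \<gamma>" for p
  proof -
    consider "p \<in> closed_segment a b" | "p \<in> closed_segment b c" | "p \<in> closed_segment c d"
      | "p \<in> closed_segment d a" using pim[unfolded pi] by blast
    then show ?thesis
    proof cases
      case 1 then obtain u where u: "0 \<le> u" "u \<le> 1" and e: "ca p = (1-u) * ca a + u * ca b" "cb p = (1-u) * cb a + u * cb b"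
        using seg_coords by blast
      have "ca p = \<alpha> + u" "cb p = \<beta>" using e va vb by (simp_all add: algebra_simps)
      then show ?thesis unfolding bnd_def using u by simp
    next
      case 2 then obtain u where u: "0 \<le> u" "u \<le> 1" and e: "ca p = (1-u) * ca b + u * ca c" "cb p = (1-u) * cb b + u * cb c"
        using seg_coords by blast
      have "ca p = \<alpha> + 1" "cb p = \<beta> + u" using e vb vc by (simp_all add: algebra_simps)
      then show ?thesis unfolding bnd_def using u by simp
    next
      case 3 then obtain u where u: "0 \<le> u" "u \<le> 1" and e: "ca p = (1-u) * ca c + u * ca d" "cb p = (1-u) * cb c + u * cb d"
        using seg_coords by blast
      have "ca p = \<alpha> + 1 - u" "cb p = \<beta> + 1" using e vc vd by (simp_all add: algebra_simps)
      then show ?thesis unfolding bnd_def using u by simp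
    next
      case 4 then obtain u where u: "0 \<le> u" "u \<le> 1" and e: "ca p = (1-u) * ca d + u * ca a" "cb p = (1-u) * cb d + u * cb a"
        using seg_coords by blast
      have "ca p = \<alpha>" "cb p = \<beta> + 1 - u" using e vd va by (simp_all add: algebra_simps)
      then show ?thesis unfolding bnd_def using u by simp
    qed
  qed
  have bnd_Pcl: "p \<in> Pcl" if "bnd p" for p using that unfolding bnd_def Pcl_def by auto
  have bnd_Pin: "p \<notin> Pin" if "bnd p" for p using that unfolding bnd_def Pin_def by auto
  have Pcl_Pin: "p \<in> Pin" if "p \<in> Pcl" "\<not> bnd p" for p using that unfolding bnd_def Pin_def Pcl_def by auto
  have Pin_Pcl: "Pin \<subseteq> Pcl" unfolding Pin_def Pcl_def by auto
  define R where "R = 2 * (norm w1 + norm w2) + 1"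
  define S where "S = ball (0::complex) R"
  have Pcl_S: "Pcl \<subseteq> S"
  proof
    fix p assume "p \<in> Pcl"
    then have h: "\<bar>ca p\<bar> \<le> 1" "\<bar>cb p\<bar> \<le> 1" using \<alpha> \<beta> unfolding Pcl_def by auto
    have "\<bar>ca p\<bar> * norm w1 \<le> norm w1" using h(1) by (simp add: mult_left_le_one_le)
    moreover have "\<bar>cb p\<bar> * norm w2 \<le> norm w2" using h(2) by (simp add: mult_left_le_one_le)
    ultimately have "norm p \<le> norm w1 + norm w2" using norm_coords[of p] by linarith
    moreover have "0 \<le> norm w1" "0 \<le> norm w2" by simp_all
    ultimately have "norm p < R" unfolding R_def by (smt (verit))
    then show "p \<in> S" unfolding S_def by simp
  qed
  have img_Pcl: "path_image \<gamma> \<subseteq> Pcl" using seg_bnd bnd_Pcl by blast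
  have img_S: "path_image \<gamma> \<subseteq> S" using img_Pcl Pcl_S by blast
  have ni: "\<alpha> \<notin> \<int>" "\<alpha> + 1 \<notin> \<int>" "\<beta> \<notin> \<int>" "\<beta> + 1 \<notin> \<int>" using notint \<alpha> \<beta> by auto
  have bnd_notL: "p \<notin> L" if "bnd p" for p
    using that ni unfolding bnd_def L_mem by auto
  have bnd_notZ: "p \<notin> Zs" if "bnd p" for p
  proof
    assume "p \<in> Zs"
    then have "ca p - \<alpha> \<notin> \<int>" "cb p - \<beta> \<notin> \<int>" using good by auto
    then show False using that unfolding bnd_def by auto
  qed
  define pz where "pz = {w\<in>S. g w = 0 \<or> w \<in> L}"
  have pz_sub: "pz \<subseteq> (Zs \<inter> S) \<union> (L \<inter> S)" unfolding pz_def Zs_def by auto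
  have fin_pz: "finite pz"
    using finite_subset[OF pz_sub] Zs_finite_bounded[of S] L_finite_bounded[of S] unfolding S_def by auto
  have pz_nb: "\<not> bnd p" if "p \<in> pz" for p
    using that pz_sub bnd_notL bnd_notZ by blast
  have valid: "valid_path \<gamma>" unfolding \<gamma>_def by (intro valid_path_join valid_path_linepath) auto
  have pth: "path \<gamma>" using valid valid_path_imp_path by blast
  have loop: "pathfinish \<gamma> = pathstart \<gamma>" unfolding \<gamma>_def by simp
  have img_pz: "path_image \<gamma> \<subseteq> S - pz"
    using img_S seg_bnd pz_nb by blast
  have homo: "\<forall>z. z \<notin> S \<longrightarrow> winding_number \<gamma> z = 0"
    using winding_number_zero_outside[OF pth _ loop _ img_S] unfolding S_def by auto
  have holS: "g holomorphic_on S - L" by (rule holomorphic_on_subset[OF holo]) auto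
  have poles: "\<forall>p\<in>S \<inter> L. is_pole g p" using pole_L by blast
  have AP: "contour_integral \<gamma> (\<lambda>x. deriv g x * (\<lambda>_. 1) x / g x) = 2 * pi * \<i> *
          (\<Sum>p\<in>pz. winding_number \<gamma> p * (\<lambda>_. 1) p * zorder g p)"
    unfolding pz_def
    by (rule argument_principle[of S g L "\<lambda>_. 1" \<gamma>]) 
       (use holS valid loop img_pz homo fin_pz poles in \<open>auto simp: S_def pz_def\<close>)
  define F where "F = (\<lambda>x. deriv g x / g x)"
  have AP2: "contour_integral \<gamma> F = 2 * pi * \<i> * (\<Sum>p\<in>pz. winding_number \<gamma> p * of_int (zorder g p))"
    using AP unfolding F_def by simp
  define Om where "Om = - (L \<union> Zs)"
  have openO: "open Om" unfolding Om_def using L_closed Zs_closed by auto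
  have holO: "g holomorphic_on Om" by (rule holomorphic_on_subset[OF holo]) (auto simp: Om_def)
  have dholO: "deriv g holomorphic_on Om" by (rule holomorphic_deriv[OF holO openO])
  have FholO: "F holomorphic_on Om" unfolding F_def
    by (intro holomorphic_intros holO dholO) (auto simp: Om_def Zs_def)
  have Fcont: "continuous_on Om F" using FholO holomorphic_on_imp_continuous_on by blast
  have img_O: "path_image \<gamma> \<subseteq> Om" using seg_bnd bnd_notL bnd_notZ unfolding Om_def by blast
  have segO: "closed_segment a b \<subseteq> Om" "closed_segment b c \<subseteq> Om" "closed_segment c d \<subseteq> Om" "closed_segment d a \<subseteq> Om"
    using img_O pi by blast+
  have ints: "F contour_integrable_on linepath a b" "F contour_integrable_on linepath b c"
     "F contour_integrable_on linepath c d" "F contour_integrable_on linepath d a"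
    using segO by (auto intro!: contour_integrable_continuous_linepath continuous_on_subset[OF Fcont])
  have "contour_integral \<gamma> F = contour_integral (linepath a b) F + (contour_integral (linepath b c) F
      + (contour_integral (linepath c d) F + contour_integral (linepath d a) F))"
    unfolding \<gamma>_def using ints by (simp add: contour_integrable_joinI valid_path_join)
  moreover have "\<And>u. F (u + w1) = F u" "\<And>u. F (u + w2) = F u"
    unfolding F_def using periodic_deriv[OF L_w1] periodic_deriv[OF L_w2] per1 per2 by auto
  moreover have "linepath b c = linepath (a + w1) (d + w1)" unfolding b_def c_def d_def by (simp add: algebra_simps)
  moreover have "linepath c d = linepath (b + w2) (a + w2)" unfolding b_def c_def d_def by (simp add: algebra_simps)
  ultimately have "contour_integral \<gamma> F = contour_integral (linepath a b) F + (contour_integral (linepath a d) F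
      + (contour_integral (linepath b a) F + contour_integral (linepath d a) F))"
    by (simp add: shift_integral)
  moreover have "contour_integral (linepath b a) F = - contour_integral (linepath a b) F"
    using contour_integral_reversepath[OF valid_path_linepath, of a b F] by simp
  moreover have "contour_integral (linepath d a) F = - contour_integral (linepath a d) F"
    using contour_integral_reversepath[OF valid_path_linepath, of a d F] by simp
  ultimately have int0: "contour_integral \<gamma> F = 0" by simp
  have sum0: "(\<Sum>p\<in>pz. winding_number \<gamma> p * of_int (zorder g p)) = 0"
    using AP2 int0 by simp
  have convPin: "convex Pin"
  proof -
    have "Pin = ca -` {\<alpha><..<\<alpha>+1} \<inter> cb -` {\<beta><..<\<beta>+1}" unfolding Pin_def by auto
    then show ?thesis using convex_linear_vimage[OF lin_ca, of "{\<alpha><..<\<alpha>+1}"]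
        convex_linear_vimage[OF lin_cb, of "{\<beta><..<\<beta>+1}"] by (simp add: convex_Int)
  qed
  have convPcl: "convex Pcl"
  proof -
    have "Pcl = ca -` {\<alpha>..\<alpha>+1} \<inter> cb -` {\<beta>..\<beta>+1}" unfolding Pcl_def by auto
    then show ?thesis using convex_linear_vimage[OF lin_ca, of "{\<alpha>..\<alpha>+1}"]
        convex_linear_vimage[OF lin_cb, of "{\<beta>..\<beta>+1}"] by (simp add: convex_Int)
  qed
  have Pin_img: "Pin \<inter> path_image \<gamma> = {}" using seg_bnd bnd_Pin by blast
  obtain k where k: "\<forall>p\<in>Pin. winding_number \<gamma> p = k"
    using winding_number_constant[OF pth loop convex_connected[OF convPin] Pin_img]
    unfolding constant_on_def by blast
  define p0 where "p0 = a + of_real (1/2) * w1 + of_real (1/2) * w2"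
  have p0: "ca p0 = \<alpha> + 1/2" "cb p0 = \<beta> + 1/2"
    unfolding p0_def cA_add cB_add cA_ofreal cB_ofreal using va by (simp_all add: cA_w1[OF K] cB_w1 cA_w2 cB_w2[OF K])
  have p0Pin: "p0 \<in> Pin" using p0 unfolding Pin_def by simp
  have "p0 \<notin> path_image \<gamma>" using p0Pin Pin_img by blast
  then have p0seg: "p0 \<notin> closed_segment a b" "p0 \<notin> closed_segment b c" "p0 \<notin> closed_segment c d"
     "p0 \<notin> closed_segment d a" unfolding pi by simp_all
  have wn: "winding_number \<gamma> p0 = winding_number (linepath a b) p0 + (winding_number (linepath b c) p0
     + (winding_number (linepath c d) p0 + winding_number (linepath d a) p0))"
    unfolding \<gamma>_def using p0seg by (simp add: winding_number_join path_image_join)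
  define KK where "KK = Im (w1 * cnj w2)"
  have KK: "KK \<noteq> 0" using K unfolding KK_def .
  have e1: "Im ((b - a) * cnj (b - p0)) = - KK / 2" unfolding b_def p0_def KK_def by (simp add: algebra_simps; (simp add: field_simps)?)
  have e2: "Im ((c - b) * cnj (c - p0)) = - KK / 2" unfolding b_def c_def p0_def KK_def by (simp add: algebra_simps; (simp add: field_simps)?)
  have e3: "Im ((d - c) * cnj (d - p0)) = - KK / 2" unfolding c_def d_def p0_def KK_def by (simp add: algebra_simps; (simp add: field_simps)?)
  have e4: "Im ((a - d) * cnj (a - p0)) = - KK / 2" unfolding d_def p0_def KK_def by (simp add: algebra_simps; (simp add: field_simps)?)
  have f1: "Im ((a - b) * cnj (a - p0)) = KK / 2" unfolding b_def p0_def KK_def by (simp add: algebra_simps; (simp add: field_simps)?)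
  have f2: "Im ((b - c) * cnj (b - p0)) = KK / 2" unfolding b_def c_def p0_def KK_def by (simp add: algebra_simps; (simp add: field_simps)?)
  have f3: "Im ((c - d) * cnj (c - p0)) = KK / 2" unfolding c_def d_def p0_def KK_def by (simp add: algebra_simps; (simp add: field_simps)?)
  have f4: "Im ((d - a) * cnj (d - p0)) = KK / 2" unfolding d_def p0_def KK_def by (simp add: algebra_simps; (simp add: field_simps)?)
  have knz: "k \<noteq> 0"
  proof -
    have kk: "k = winding_number \<gamma> p0" using k p0Pin by simp
    show ?thesis
    proof (cases "KK < 0")
      case True
      have "0 < Re (winding_number (linepath a b) p0)" "0 < Re (winding_number (linepath b c) p0)"
           "0 < Re (winding_number (linepath c d) p0)" "0 < Re (winding_number (linepath d a) p0)"
        using True e1 e2 e3 e4 by (auto intro!: winding_number_linepath_pos_lt)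
      then have "0 < Re k" unfolding kk wn by simp
      then show ?thesis by auto
    next
      case False
      then have "0 < KK" using KK by simp
      then have "Re (winding_number (linepath a b) p0) < 0" "Re (winding_number (linepath b c) p0) < 0"
           "Re (winding_number (linepath c d) p0) < 0" "Re (winding_number (linepath d a) p0) < 0"
        using f1 f2 f3 f4 by (auto intro!: winding_number_linepath_neg_lt)
      then have "Re k < 0" unfolding kk wn by simp
      then show ?thesis by auto
    qed
  qed
  have wn_out: "winding_number \<gamma> p = 0" if "p \<in> pz" "p \<notin> Pin" for p
  proof -
    have "p \<notin> Pcl" using Pcl_Pin pz_nb that by blast
    then show ?thesis using winding_number_zero_outside[OF pth convPcl loop _ img_Pcl] by blast
  qed
  have "(\<Sum>p\<in>pz. winding_number \<gamma> p * of_int (zorder g p)) =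
        (\<Sum>p\<in>pz \<inter> Pin. winding_number \<gamma> p * of_int (zorder g p)) + (\<Sum>p\<in>pz - Pin. winding_number \<gamma> p * of_int (zorder g p))"
    by (rule sum.Int_Diff[OF fin_pz])
  also have "(\<Sum>p\<in>pz - Pin. winding_number \<gamma> p * of_int (zorder g p)) = 0"
    by (rule sum.neutral) (use wn_out in auto)
  also have "(\<Sum>p\<in>pz \<inter> Pin. winding_number \<gamma> p * of_int (zorder g p)) = (\<Sum>p\<in>pz \<inter> Pin. k * of_int (zorder g p))"
    by (rule sum.cong) (use k in auto)
  also have "\<dots> = k * of_int (\<Sum>p\<in>pz \<inter> Pin. zorder g p)" by (simp add: sum_distrib_left)
  finally have "k * of_int (\<Sum>p\<in>pz \<inter> Pin. zorder g p) = 0" using sum0 by simp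
  then have "(of_int (\<Sum>p\<in>pz \<inter> Pin. zorder g p) :: complex) = 0" using knz by (metis mult_eq_0_iff)
  then have sumz: "(\<Sum>p\<in>pz \<inter> Pin. zorder g p) = 0" by (metis of_int_eq_0_iff)
  have R0: "0 < R" unfolding R_def by (simp add: add_nonneg_pos)
  have ca0: "ca 0 = 0" "cb 0 = 0" by (simp_all add: cA_def cB_def)
  have pzPin: "pz \<inter> Pin = insert 0 (Zs \<inter> Pin)"
  proof (intro equalityI subsetI)
    fix p assume p: "p \<in> pz \<inter> Pin"
    show "p \<in> insert 0 (Zs \<inter> Pin)"
    proof (cases "p \<in> L")
      case True
      then have "ca p \<in> \<int>" "cb p \<in> \<int>" using L_mem by auto
      then have "ca p = 0" "cb p = 0" using int_mid[OF \<alpha>] int_mid[OF \<beta>] p unfolding Pin_def by auto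
      then have "p = 0" using dec[of p] by simp
      then show ?thesis by simp
    next
      case False
      then show ?thesis using p unfolding pz_def Zs_def by auto
    qed
  next
    fix p assume p: "p \<in> insert 0 (Zs \<inter> Pin)"
    show "p \<in> pz \<inter> Pin"
    proof (cases "p = 0")
      case True
      then show ?thesis using R0 L_0 \<alpha> \<beta> ca0 unfolding pz_def S_def Pin_def by auto
    next
      case False
      then have "p \<in> Zs" "p \<in> Pin" using p by auto
      then show ?thesis using Pin_Pcl Pcl_S unfolding pz_def Zs_def by auto
    qed
  qed
  have finZ: "finite (Zs \<inter> Pin)" using fin_pz pzPin by (metis finite_Int finite_insert)
  have "0 \<notin> Zs \<inter> Pin" using L_0 unfolding Zs_def by auto
  then have "(\<Sum>p\<in>pz \<inter> Pin. zorder g p) = zorder g 0 + (\<Sum>p\<in>Zs \<inter> Pin. zorder g p)"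
    unfolding pzPin using finZ by simp
  then show ?thesis using sumz finZ by simp
qed

end



context ell begin

lemma rep_ex: assumes z: "z \<in> Zs" and good: "\<forall>z\<in>Zs. ca z - \<alpha> \<notin> \<int> \<and> cb z - \<beta> \<notin> \<int>"
  shows "\<exists>r l. r \<in> Zs \<and> \<alpha> < ca r \<and> ca r < \<alpha> + 1 \<and> \<beta> < cb r \<and> cb r < \<beta> + 1 \<and> l \<in> L \<and> z = r + l"
proof -
  define l where "l = of_int \<lfloor>ca z - \<alpha>\<rfloor> * w1 + of_int \<lfloor>cb z - \<beta>\<rfloor> * w2"
  have lL: "l \<in> L" unfolding l_def by (rule L_int)
  define r where "r = z - l"
  have zz: "z \<notin> L" "g z = 0" using z by (auto simp: Zs_def)
  have "r \<notin> L"
  proof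
    assume "r \<in> L" then have "r + l \<in> L" using lL L_add by blast
    then show False using zz by (simp add: r_def)
  qed
  moreover have "g r = 0"
    using gper[OF L_neg[OF lL], of z] zz unfolding r_def by simp
  ultimately have rZ: "r \<in> Zs" by (simp add: Zs_def)
  have cr: "ca r = ca z - \<lfloor>ca z - \<alpha>\<rfloor>" "cb r = cb z - \<lfloor>cb z - \<beta>\<rfloor>"
    unfolding r_def l_def by (simp_all add: cA_diff cB_diff ca_int cb_int)
  have n1: "ca z - \<alpha> \<notin> \<int>" "cb z - \<beta> \<notin> \<int>" using good z by auto
  have "of_int \<lfloor>ca z - \<alpha>\<rfloor> \<noteq> ca z - \<alpha>" using n1(1) by (metis Ints_of_int)
  moreover have "of_int \<lfloor>cb z - \<beta>\<rfloor> \<noteq> cb z - \<beta>" using n1(2) by (metis Ints_of_int)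
  moreover have "of_int \<lfloor>ca z - \<alpha>\<rfloor> \<le> ca z - \<alpha>" "ca z - \<alpha> < of_int \<lfloor>ca z - \<alpha>\<rfloor> + 1"
    "of_int \<lfloor>cb z - \<beta>\<rfloor> \<le> cb z - \<beta>" "cb z - \<beta> < of_int \<lfloor>cb z - \<beta>\<rfloor> + 1" by linarith+
  ultimately have "\<alpha> < ca r" "ca r < \<alpha> + 1" "\<beta> < cb r" "cb r < \<beta> + 1" unfolding cr by linarith+
  moreover have "z = r + l" unfolding r_def by simp
  ultimately show ?thesis using rZ lL by blast
qed

end

theorem lemma4p10:
  fixes w1 w2 :: complex and g :: "complex \<Rightarrow> complex" and x y z Q R S :: complex
  assumes lin_indep: "Im (w2 / w1) \<noteq> 0"
    and per1: "\<And>w. g (w + w1) = g w"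
    and per2: "\<And>w. g (w + w2) = g w"
    and holo: "g holomorphic_on (- lattice w1 w2)"
    and pole: "is_pole g 0"
    and pole_order: "zorder g 0 = -5"
    and ram_pts: "x \<notin> lattice w1 w2" "y \<notin> lattice w1 w2" "z \<notin> lattice w1 w2"
    and ram_distinct: "\<not> lat_cong w1 w2 x y" "\<not> lat_cong w1 w2 x z" "\<not> lat_cong w1 w2 y z"
    and ram: "\<And>w. w \<notin> lattice w1 w2 \<Longrightarrow>
        zorder (\<lambda>u. g u - g w) w =
          (if lat_cong w1 w2 w x \<or> lat_cong w1 w2 w y \<or> lat_cong w1 w2 w z then 3 else 1)"
    and sym: "(\<forall>w. w \<notin> lattice w1 w2 \<longrightarrow> g (- w) = g w) \<or>
              (\<forall>w. w \<notin> lattice w1 w2 \<longrightarrow> g (- w) = - g w)"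
    and two_torsion: "2 * Q \<in> lattice w1 w2" "2 * R \<in> lattice w1 w2" "2 * S \<in> lattice w1 w2"
    and nonzero: "Q \<notin> lattice w1 w2" "R \<notin> lattice w1 w2" "S \<notin> lattice w1 w2"
    and QRS_distinct: "\<not> lat_cong w1 w2 Q R" "\<not> lat_cong w1 w2 Q S" "\<not> lat_cong w1 w2 R S"
    and xQ: "x = Q"
    and gQ: "g Q = 0"
  shows "zorder g Q = 3 \<and> zorder g R = 1 \<and> zorder g S = 1 \<and>
         (\<forall>w. w \<notin> lattice w1 w2 \<longrightarrow>
            (g w = 0 \<longleftrightarrow> lat_cong w1 w2 w Q \<or> lat_cong w1 w2 w R \<or> lat_cong w1 w2 w S))"
proof -
  interpret E: ell w1 w2 g
    by (unfold_locales) (use lin_indep per1 per2 holo pole in auto)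
  have odd: "\<forall>w. w \<notin> lattice w1 w2 \<longrightarrow> g (- w) = - g w"
    using sym E.not_even pole_order by blast
  have tors0: "g T = 0" if T: "2 * T \<in> lattice w1 w2" "T \<notin> lattice w1 w2" for T
  proof -
    have "g (- T) = - g T" using odd T by blast
    moreover have "g (T + - (2 * T)) = g T" by (rule E.gper[OF E.L_neg[OF T(1)]])
    moreover have "T + - (2 * T) = - T" by simp
    ultimately have "g T = - g T" by simp
    then show ?thesis by simp
  qed
  have gR: "g R = 0" and gS: "g S = 0" using tors0 two_torsion nonzero by auto
  have QZ: "Q \<in> E.Zs" and RZ: "R \<in> E.Zs" and SZ: "S \<in> E.Zs"
    using gQ gR gS nonzero by (auto simp: E.Zs_def)
  have zo: "zorder g w = (if lat_cong w1 w2 w x \<or> lat_cong w1 w2 w y \<or> lat_cong w1 w2 w z then 3 else 1)"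
    if "w \<in> E.Zs" for w
  proof -
    have "w \<notin> lattice w1 w2" "g w = 0" using that by (auto simp: E.Zs_def)
    then show ?thesis using ram[of w] by simp
  qed
  have zo_ge: "zorder g w \<ge> 1" if "w \<in> E.Zs" for w using zo[OF that] by simp
  have zo13: "zorder g w = 1 \<or> zorder g w = 3" if "w \<in> E.Zs" for w using zo[OF that] by simp
  have zQ: "zorder g Q = 3"
  proof -
    have "lat_cong w1 w2 Q x" unfolding xQ lat_cong_def using E.L_0 by simp
    then show ?thesis using zo[OF QZ] by simp
  qed
  obtain \<alpha> \<beta> where \<alpha>: "-1 < \<alpha>" "\<alpha> < 0" and \<beta>: "-1 < \<beta>" "\<beta> < 0"
    and good: "\<forall>z\<in>E.Zs. E.ca z - \<alpha> \<notin> \<int> \<and> E.cb z - \<beta> \<notin> \<int>"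
    using E.choose_good by blast
  define Pin where "Pin = {p. \<alpha> < E.ca p \<and> E.ca p < \<alpha> + 1 \<and> \<beta> < E.cb p \<and> E.cb p < \<beta> + 1}"
  define A where "A = E.Zs \<inter> Pin"
  have AC: "finite A \<and> zorder g 0 + (\<Sum>p\<in>A. zorder g p) = 0"
    unfolding A_def Pin_def by (rule E.arg_count[OF \<alpha> \<beta> good])
  then have finA: "finite A" and sumA: "(\<Sum>p\<in>A. zorder g p) = 5" using pole_order by auto
  have rep: "\<exists>r l. r \<in> A \<and> l \<in> lattice w1 w2 \<and> w = r + l" if "w \<in> E.Zs" for w
    using E.rep_ex[OF that good] unfolding A_def Pin_def by blast
  obtain rQ lQ where rQ: "rQ \<in> A" "lQ \<in> lattice w1 w2" "Q = rQ + lQ" using rep[OF QZ] by blast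
  obtain rR lR where rR: "rR \<in> A" "lR \<in> lattice w1 w2" "R = rR + lR" using rep[OF RZ] by blast
  obtain rS lS where rS: "rS \<in> A" "lS \<in> lattice w1 w2" "S = rS + lS" using rep[OF SZ] by blast
  have AZ: "A \<subseteq> E.Zs" unfolding A_def by auto
  have zrQ: "zorder g rQ = zorder g Q" using E.zorder_per[OF rQ(2), of rQ] rQ(3) by simp
  have zrR: "zorder g rR = zorder g R" using E.zorder_per[OF rR(2), of rR] rR(3) by simp
  have zrS: "zorder g rS = zorder g S" using E.zorder_per[OF rS(2), of rS] rS(3) by simp
  have cong_r: "lat_cong w1 w2 u v" if "u = r + l1" "v = r + l2" "l1 \<in> lattice w1 w2" "l2 \<in> lattice w1 w2" for u v r l1 l2
    unfolding lat_cong_def using E.L_diff[OF that(3,4)] that(1,2) by simp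
  have dQR: "rQ \<noteq> rR" using cong_r[OF rQ(3) _ rQ(2) rR(2)] rR(3) QRS_distinct(1) by auto
  have dQS: "rQ \<noteq> rS" using cong_r[OF rQ(3) _ rQ(2) rS(2)] rS(3) QRS_distinct(2) by auto
  have dRS: "rR \<noteq> rS" using cong_r[OF rR(3) _ rR(2) rS(2)] rS(3) QRS_distinct(3) by auto
  define B where "B = {rQ, rR, rS}"
  have BA: "B \<subseteq> A" unfolding B_def using rQ rR rS by auto
  have "(\<Sum>p\<in>A. zorder g p) = (\<Sum>p\<in>B. zorder g p) + (\<Sum>p\<in>A - B. zorder g p)"
    using sum.subset_diff[OF BA finA, of "zorder g"] by (simp add: add.commute)
  moreover have "(\<Sum>p\<in>B. zorder g p) = zorder g Q + zorder g R + zorder g S"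
    unfolding B_def using dQR dQS dRS zrQ zrR zrS by simp
  moreover have "(\<Sum>p\<in>A - B. zorder g p) \<ge> of_nat (card (A - B))"
  proof -
    have "(\<Sum>p\<in>A - B. zorder g p) \<ge> (\<Sum>p\<in>A - B. 1)"
      by (rule sum_mono) (use AZ zo_ge in auto)
    then show ?thesis by simp
  qed
  moreover have "zorder g R \<ge> 1" "zorder g S \<ge> 1" using zo_ge RZ SZ by auto
  moreover have "zorder g R = 1 \<or> zorder g R = 3" "zorder g S = 1 \<or> zorder g S = 3" using zo13 RZ SZ by auto
  ultimately have zR: "zorder g R = 1" and zS: "zorder g S = 1" and cardAB: "card (A - B) = 0"
    using sumA zQ by auto
  have AeqB: "A = B"
  proof -
    have "finite (A - B)" using finA by simp
    then have "A - B = {}" using cardAB by simp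
    then show ?thesis using BA by auto
  qed
  have zeros: "g w = 0 \<longleftrightarrow> lat_cong w1 w2 w Q \<or> lat_cong w1 w2 w R \<or> lat_cong w1 w2 w S"
    if w: "w \<notin> lattice w1 w2" for w
  proof
    assume "g w = 0"
    then have "w \<in> E.Zs" using w by (simp add: E.Zs_def)
    then obtain r l where r: "r \<in> A" "l \<in> lattice w1 w2" "w = r + l" using rep by blast
    then have "r = rQ \<or> r = rR \<or> r = rS" using AeqB unfolding B_def by auto
    then show "lat_cong w1 w2 w Q \<or> lat_cong w1 w2 w R \<or> lat_cong w1 w2 w S"
    proof (elim disjE)
      assume "r = rQ" then show ?thesis using cong_r[OF r(3) _ r(2) rQ(2), of Q] rQ(3) by simp
    next
      assume "r = rR" then show ?thesis using cong_r[OF r(3) _ r(2) rR(2), of R] rR(3) by simp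
    next
      assume "r = rS" then show ?thesis using cong_r[OF r(3) _ r(2) rS(2), of S] rS(3) by simp
    qed
  next
    assume "lat_cong w1 w2 w Q \<or> lat_cong w1 w2 w R \<or> lat_cong w1 w2 w S"
    then show "g w = 0" using E.cong_eq gQ gR gS by metis
  qed
  show ?thesis using zQ zR zS zeros by blast
qed


end
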